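(* Let $u$ be a one-sided Sturmian sequence with left special sequence $l=l_1l_2\dots$, and let $n>1$ and $x\in\{0,1\}$ be such that $xL_{n-1}=xl_1l_2\dots l_{n-1}$ is a significant block of $\tilde X_u$. Then the HB diagram of $X_u^+$ contains the arrow $xl_1l_2\dots l_{n-1}\to xl_1l_2\dots l_n$.
   Context: A sequence $u\in\{0,1\}^{\mathbb N}$ is Sturmian if for every $n\ge1$ exactly $n+1$ distinct blocks of length $n$ occur in $u$. $X_u^+$ is the closure of $\{\sigma^n u:n\in\mathbb N\}$, $\sigma$ the shift $(\sigma x)_i=x_{i+1}$, and $\tilde X_u=\{x\in\{0,1\}^{\mathbb Z}: x_px_{p+1}\dots\in X_u^+\ \forall p\}$; the languages of $u$, $X_u^+$, $\tilde X_u$ coincide. For each $n$ there is a unique block $L_n$ of length $n$ with $0L_n$ and $1L_n$ in the language; these are the prefixes $L_n=l_1\dots l_n$ of the left special sequence $l$. For a block $a_{-n}\dots a_0$ in the language, $\mathrm{fol}(a_{-n}\dots a_0)=\{b_0b_1\dots\in X_u^+:\exists b\in\tilde X_u,\ b_{-n}\dots b_0=a_{-n}\dots a_0\}$. A block $a_{-n}\dots a_0$ ($n\ge1$) is significant if $\mathrm{fol}(a_{-n}\dots a_0)\subsetneq\mathrm{fol}(a_{-n+1}\dots a_0)$; $0$ and $1$ are also significant. $\mathrm{sig}(\cdot)$ is the longest significant suffix. The HB diagram has vertex set the significant blocks and an arrow $\alpha\to\beta$ iff there is a symbol $b$ with $\alpha b$ in the language and $\beta=\mathrm{sig}(\alpha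 b)$. *)

theory Defs
  imports "HOL-Analysis.Analysis" "HOL-Library.Sublist"
begin

text \<open>Sequences over the alphabet {0,1} are modelled as nat-valued functions; finite
blocks are lists of naturals. One-sided sequences: nat \<Rightarrow> nat (product topology of
discrete spaces); two-sided sequences: int \<Rightarrow> nat.\<close>

definition lang :: "(nat \<Rightarrow> nat) \<Rightarrow> nat list set" where
  "lang u = {w. \<exists>i. \<forall>j<length w. w ! j = u (i + j)}"

definition sturmian :: "(nat \<Rightarrow> nat) \<Rightarrow> bool" where
  "sturmian u \<longleftrightarrow> (\<forall>i. u i \<in> {0,1}) \<and>
     (\<forall>n\<ge>1. card {w \<in> lang u. length w = n} = n + 1)"

definition shift :: "(nat \<Rightarrow> nat) \<Rightarrow> (nat \<Rightarrow> nat)" where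
  "shift x = (\<lambda>i. x (Suc i))"

definition Xplus :: "(nat \<Rightarrow> nat) \<Rightarrow> (nat \<Rightarrow> nat) set" where
  "Xplus u = closure {(shift ^^ n) u | n. True}"

definition Xtilde :: "(nat \<Rightarrow> nat) \<Rightarrow> (int \<Rightarrow> nat) set" where
  "Xtilde u = {x. \<forall>p::int. (\<lambda>i::nat. x (p + int i)) \<in> Xplus u}"

text \<open>For a block w = a_{-n} ... a_0 (so length w = n+1), fol u w is the set of
right tails b_0 b_1 ... of two-sided points b with b_{-n} ... b_0 = w.\<close>
definition fol :: "(nat \<Rightarrow> nat) \<Rightarrow> nat list \<Rightarrow> (nat \<Rightarrow> nat) set" where
  "fol u w = {y \<in> Xplus u. \<exists>b \<in> Xtilde u.
      (\<forall>j<length w. b (int j - int (length w - 1)) = w ! j) \<and>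
      (\<forall>i. y i = b (int i))}"

definition significant :: "(nat \<Rightarrow> nat) \<Rightarrow> nat list \<Rightarrow> bool" where
  "significant u w \<longleftrightarrow> w = [0] \<or> w = [1] \<or>
     (w \<in> lang u \<and> length w \<ge> 2 \<and> fol u w \<subset> fol u (tl w))"

definition sig :: "(nat \<Rightarrow> nat) \<Rightarrow> nat list \<Rightarrow> nat list" where
  "sig u w = (THE s. suffix s w \<and> significant u s \<and>
       (\<forall>s'. suffix s' w \<and> significant u s' \<longrightarrow> length s' \<le> length s))"

definition HB_arrow :: "(nat \<Rightarrow> nat) \<Rightarrow> nat list \<Rightarrow> nat list \<Rightarrow> bool" where
  "HB_arrow u \<alpha> \<beta> \<longleftrightarrow> significant u \<alpha> \<and> significant u \<beta> \<and>
     (\<exists>b. \<alpha> @ [b] \<in> lang u \<and> \<beta> = sig u (\<alpha> @ [b]))"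

text \<open>l is the left special sequence l_1 l_2 ..., indexed from 1; L_n = l_1 ... l_n.\<close>
definition Lblock :: "(nat \<Rightarrow> nat) \<Rightarrow> nat \<Rightarrow> nat list" where
  "Lblock l n = map l [1..<n+1]"

definition left_special_seq :: "(nat \<Rightarrow> nat) \<Rightarrow> (nat \<Rightarrow> nat) \<Rightarrow> bool" where
  "left_special_seq u l \<longleftrightarrow>
     (\<forall>n. 0 # Lblock l n \<in> lang u \<and> 1 # Lblock l n \<in> lang u)"

end

theory Submission
  imports Defs
begin


lemma shift_pow: "(shift ^^ n) u = (\<lambda>j. u (n + j))"
  by (induction n arbitrary: u) (auto simp: shift_def funpow_Suc_right)

lemma closure_iff_opens: "y \<in> closure S \<longleftrightarrow> (\<forall>T. open T \<and> y \<in> T \<longrightarrow> T \<inter> S \<noteq> {})"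
  by (auto simp: closure_iff_nhds_not_empty)

lemma Xplus_iff: "y \<in> Xplus u \<longleftrightarrow> (\<forall>K. \<exists>i. \<forall>j<K. y j = u (i + j))"
proof
  assume y: "y \<in> Xplus u"
  show "\<forall>K. \<exists>i. \<forall>j<K. y j = u (i + j)"
  proof
    fix K
    define T where "T = {f::nat\<Rightarrow>nat. \<forall>j\<in>{..<K}. f (id j) \<in> {y j}}"
    have "open T" unfolding T_def
      by (rule product_topology_basis') (auto simp: open_discrete)
    moreover have "y \<in> T" by (auto simp: T_def)
    ultimately have "T \<inter> {(shift ^^ n) u | n. True} \<noteq> {}"
      using y unfolding Xplus_def closure_iff_opens by blast
    then obtain n where "\<forall>j\<in>{..<K}. u (n + j) = y j"
      by (auto simp: T_def shift_pow)
    then show "\<exists>i. \<forall>j<K. y j = u (i + j)" by (intro exI[of _ n]) auto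
  qed
next
  assume H: "\<forall>K. \<exists>i. \<forall>j<K. y j = u (i + j)"
  show "y \<in> Xplus u" unfolding Xplus_def closure_iff_opens
  proof (intro allI impI)
    fix T :: "(nat\<Rightarrow>nat) set" assume T: "open T \<and> y \<in> T"
    then have "openin (product_topology (\<lambda>i. euclidean) UNIV) T" by (simp add: open_fun_def)
    from product_topology_open_contains_basis[OF this] T obtain X where
      X0: "y \<in> (\<Pi>\<^sub>E i\<in>UNIV. X i)" "finite {i. X i \<noteq> topspace euclidean}" "(\<Pi>\<^sub>E i\<in>UNIV. X i) \<subseteq> T"
      by blast
    then have X: "y \<in> (\<Pi>\<^sub>E i\<in>UNIV. X i)" "finite {i. X i \<noteq> UNIV}" "(\<Pi>\<^sub>E i\<in>UNIV. X i) \<subseteq> T"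
      by auto
    define F where "F = {i. X i \<noteq> UNIV}"
    define K where "K = Suc (Max (insert 0 F))"
    have FK: "i \<in> F \<Longrightarrow> i < K" for i using X(2) unfolding K_def F_def
      by (simp add: le_imp_less_Suc)
    obtain i where i: "\<forall>j<K. y j = u (i + j)" using H by blast
    have "(\<lambda>j. u (i + j)) \<in> (\<Pi>\<^sub>E i\<in>UNIV. X i)"
    proof -
      have "u (i + j) \<in> X j" for j
      proof (cases "j \<in> F")
        case True then show ?thesis using FK i X(1) by (metis PiE_mem UNIV_I)
      next
        case False then show ?thesis by (auto simp: F_def)
      qed
      then show ?thesis by auto
    qed
    with X(3) have "(\<lambda>j. u (i + j)) \<in> T" by blast
    then show "T \<inter> {(shift ^^ n) u | n. True} \<noteq> {}" by (auto simp: shift_pow)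
  qed
qed

lemma Xtilde_iff: "b \<in> Xtilde u \<longleftrightarrow> (\<forall>p K. \<exists>i. \<forall>j<K. b (p + int j) = u (i + j))"
  unfolding Xtilde_def Xplus_iff by auto

lemma Xtilde_shift: "b \<in> Xtilde u \<Longrightarrow> (\<lambda>j. b (j + d)) \<in> Xtilde u"
  unfolding Xtilde_iff by (metis add.commute add.left_commute)



definition occ :: "(nat\<Rightarrow>nat) \<Rightarrow> nat list \<Rightarrow> nat \<Rightarrow> bool" where
  "occ u w i \<longleftrightarrow> (\<forall>j<length w. w ! j = u (i + j))"

definition win :: "(nat\<Rightarrow>nat) \<Rightarrow> nat \<Rightarrow> nat \<Rightarrow> nat list" where
  "win u s m = map (\<lambda>j. u (s + j)) [0..<m]"

lemma lang_occ: "w \<in> lang u \<longleftrightarrow> (\<exists>i. occ u w i)"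
  by (simp add: lang_def occ_def)

lemma length_win[simp]: "length (win u s m) = m" by (simp add: win_def)
lemma nth_win[simp]: "j < m \<Longrightarrow> win u s m ! j = u (s + j)" by (simp add: win_def)

lemma occ_win: "occ u w s \<longleftrightarrow> w = win u s (length w)"
  by (auto simp: occ_def list_eq_iff_nth_eq)

lemma win_in_lang: "win u s m \<in> lang u"
  by (metis lang_occ length_win occ_win)

lemma sturmian_val: "sturmian u \<Longrightarrow> u i \<in> {0,1}"
  by (simp add: sturmian_def)

lemma sturmian_card: "sturmian u \<Longrightarrow> m \<ge> 1 \<Longrightarrow> card {w \<in> lang u. length w = m} = m + 1"
  by (simp add: sturmian_def)

lemma sturmian_fin: "sturmian u \<Longrightarrow> finite {w \<in> lang u. length w = m}"
proof (cases "m \<ge> 1")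
  case True
  assume "sturmian u" then show ?thesis using sturmian_card[OF _ True]
    by (metis card.infinite nat.distinct(1) add_is_0 one_neq_zero)
next
  case False
  then have "{w \<in> lang u. length w = m} \<subseteq> {[]}" by (auto simp: Suc_le_eq)
  then show ?thesis using finite_subset by blast
qed

lemma lang_letters: "sturmian u \<Longrightarrow> w \<in> lang u \<Longrightarrow> j < length w \<Longrightarrow> w ! j \<in> {0,1}"
  by (metis lang_occ occ_def sturmian_val)

lemma not_evper:
  assumes st: "sturmian u" and P: "P > 0" and per: "\<forall>t. u (i + t) = u (i + P + t)"
  shows False
proof -
  define m where "m = i + P"
  have red: "\<exists>s'<i+P. win u s m = win u s' m" for s
  proof (induction s rule: less_induct)
    case (less s)
    show ?case
    proof (cases "s < i + P")
      case True then show ?thesis by blast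
    next
      case False
      have "win u s m = win u (s - P) m"
      proof (rule nth_equalityI)
        fix j assume "j < length (win u s m)"
        then have j: "j < m" by simp
        have "u (i + (s - P - i + j)) = u (i + P + (s - P - i + j))" using per by blast
        moreover have "i + (s - P - i + j) = s - P + j" "i + P + (s - P - i + j) = s + j"
          using False by auto
        ultimately show "win u s m ! j = win u (s - P) m ! j" using j by simp
      qed simp
      moreover from less.IH[of "s - P"] P False obtain s' where "s' < i + P" "win u (s - P) m = win u s' m"
        by auto
      ultimately show ?thesis by auto
    qed
  qed
  have "{w \<in> lang u. length w = m} \<subseteq> (\<lambda>s. win u s m) ` {..<i+P}"
  proof
    fix w assume "w \<in> {w \<in> lang u. length w = m}"
    then obtain s where "w = win u s m" by (metis (mono_tags, lifting) lang_occ mem_Collect_eq occ_win)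
    with red[of s] show "w \<in> (\<lambda>s. win u s m) ` {..<i+P}" by auto
  qed
  then have "card {w \<in> lang u. length w = m} \<le> i + P"
    by (metis (no_types, lifting) card_image_le card_lessThan card_mono finite_imageI finite_lessThan le_trans)
  moreover have "card {w \<in> lang u. length w = m} = m + 1" using sturmian_card[OF st] P m_def by simp
  ultimately show False using m_def by simp
qed



lemma win_Suc: "win u s (Suc k) = win u s k @ [u (s + k)]"
  by (simp add: win_def)

lemma lang_ext: "w \<in> lang u \<Longrightarrow> \<exists>c. w @ [c] \<in> lang u"
  by (metis lang_occ occ_win win_Suc win_in_lang)

lemma rs_unique:
  assumes st: "sturmian u"
    and a: "w1 @ [0] \<in> lang u" "w1 @ [1] \<in> lang u"
    and b: "w2 @ [0] \<in> lang u" "w2 @ [1] \<in> lang u"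
    and len: "length w1 = length w2"
  shows "w1 = w2"
proof (rule ccontr)
  assume ne: "w1 \<noteq> w2"
  define k where "k = length w1"
  have k: "k \<ge> 1" using ne len k_def by (cases w1; cases w2) auto
  define B where "B = {w \<in> lang u. length w = k}"
  define A where "A = {w \<in> lang u. length w = Suc k}"
  have pref: "w @ [c] \<in> lang u \<Longrightarrow> w \<in> lang u" for w c
    by (auto simp: lang_occ occ_def nth_append) (metis less_SucI)
  define e where "e w = (SOME c. w @ [c] \<in> lang u)" for w
  have e: "w \<in> B \<Longrightarrow> w @ [e w] \<in> lang u" for w
    unfolding e_def B_def using lang_ext by (auto intro: someI_ex)
  have e01: "w \<in> B \<Longrightarrow> e w \<in> {0,1}" for w
    using lang_letters[OF st e[of w], of "length w"] by simp
  define f where "f w = w @ [e w]" for w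
  have injf: "inj_on f B" unfolding f_def inj_on_def by auto
  have "f ` B \<subseteq> A" using e by (auto simp: f_def A_def B_def)
  have w1B: "w1 \<in> B" "w2 \<in> B" using pref a b len by (auto simp: B_def k_def)
  define a1 where "a1 = w1 @ [1 - e w1]"
  define a2 where "a2 = w2 @ [1 - e w2]"
  have "a1 \<in> A" using e01[OF w1B(1)] a by (auto simp: a1_def A_def k_def)
  moreover have "a2 \<in> A" using e01[OF w1B(2)] b len by (auto simp: a2_def A_def k_def)
  moreover have "a1 \<notin> f ` B" using e01[OF w1B(1)] by (auto simp: a1_def f_def)
  moreover have "a2 \<notin> f ` B" using e01[OF w1B(2)] by (auto simp: a2_def f_def)
  moreover have "a1 \<noteq> a2" using ne by (auto simp: a1_def a2_def)
  ultimately have sub: "insert a1 (insert a2 (f ` B)) \<subseteq> A" "a1 \<notin> insert a2 (f ` B)"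
    using \<open>f ` B \<subseteq> A\<close> by auto
  have finA: "finite A" using sturmian_fin[OF st] by (simp add: A_def)
  have finB: "finite B" using sturmian_fin[OF st] by (simp add: B_def)
  have "card (insert a1 (insert a2 (f ` B))) = card B + 2"
    using sub(2) \<open>a2 \<notin> f ` B\<close> finB card_image[OF injf] by simp
  moreover have "card (insert a1 (insert a2 (f ` B))) \<le> card A"
    by (rule card_mono[OF finA sub(1)])
  moreover have "card A = k + 2" "card B = k + 1"
    using sturmian_card[OF st, of "Suc k"] sturmian_card[OF st k] k by (auto simp: A_def B_def)
  ultimately show False by simp
qed



lemma bl_range: "range (\<lambda>s. win v s k) = butlast ` range (\<lambda>s. win v s (Suc k))"
  by (simp add: image_image win_Suc)

lemma MH:
  fixes v :: "nat \<Rightarrow> nat"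
  assumes fin: "finite (range (\<lambda>s. win v s k))" "finite (range (\<lambda>s. win v s (Suc k)))"
    and le: "card (range (\<lambda>s. win v s (Suc k))) \<le> card (range (\<lambda>s. win v s k))"
  shows "\<exists>s s'. s < s' \<and> (\<forall>t. v (s + t) = v (s' + t))"
proof -
  define W where "W k = range (\<lambda>s. win v s k)" for k
  have fin': "finite (W k)" "finite (W (Suc k))" using fin by (simp_all add: W_def)
  have bl: "W k = butlast ` W (Suc k)" unfolding W_def by (rule bl_range)
  have c1: "card (W k) \<le> card (W (Suc k))" unfolding bl by (rule card_image_le[OF fin'(2)])
  have c2: "card (W (Suc k)) \<le> card (W k)" using le by (simp add: W_def)
  have eqc: "card (butlast ` W (Suc k)) = card (W (Suc k))" using c1 c2 bl by (metis le_antisym)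
  have inj: "inj_on butlast (W (Suc k))" by (rule eq_card_imp_inj_on[OF fin'(2) eqc])
  have uext: "v (s + k) = v (s' + k)" if "win v s k = win v s' k" for s s'
  proof -
    have m1: "win v s (Suc k) \<in> W (Suc k)" "win v s' (Suc k) \<in> W (Suc k)" by (simp_all add: W_def)
    have "butlast (win v s (Suc k)) = butlast (win v s' (Suc k))" using that by (simp add: win_Suc)
    then have "win v s (Suc k) = win v s' (Suc k)" using inj_onD[OF inj _ m1] by blast
    then show ?thesis unfolding win_Suc by simp
  qed
  define c where "c = card (W k)"
  have "\<not> inj_on (\<lambda>s. win v s k) {..c}"
  proof
    assume a: "inj_on (\<lambda>s. win v s k) {..c}"
    have "card {..c} \<le> card (W k)"
      by (rule card_inj_on_le[OF a _ fin'(1)]) (auto simp: W_def)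
    then show False by (simp add: c_def)
  qed
  then obtain s0 s1 where s01: "s0 \<noteq> s1" "win v s0 k = win v s1 k" unfolding inj_on_def by blast
  obtain s s' where ss: "s < s'" "win v s k = win v s' k"
  proof (cases "s0 < s1")
    case True then show ?thesis using that s01 by blast
  next
    case False then have "s1 < s0" using s01(1) by linarith
    then show ?thesis using that s01(2) by metis
  qed
  have "v (s + t) = v (s' + t)" for t
  proof (induction t rule: less_induct)
    case (less t)
    show ?case
    proof (cases "t < k")
      case True
      have "win v s k ! t = win v s' k ! t" using ss(2) by simp
      then show ?thesis using True by simp
    next
      case False
      have "win v (s + (t - k)) k = win v (s' + (t - k)) k"
      proof (rule nth_equalityI)
        fix j assume "j < length (win v (s + (t - k)) k)"
        then have j: "j < k" by simp
        then have lt: "t - k + j < t" using False by linarith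
        have "v (s + (t - k + j)) = v (s' + (t - k + j))" by (rule less.IH[OF lt])
        then show "win v (s + (t - k)) k ! j = win v (s' + (t - k)) k ! j"
          using j by (simp add: add.assoc)
      qed simp
      from uext[OF this] False show ?thesis by (simp add: add.assoc)
    qed
  qed
  then show ?thesis using ss(1) by blast
qed



lemma recurrent:
  assumes st: "sturmian u" and w: "w \<in> lang u"
  shows "\<exists>i\<ge>N. occ u w i"
proof (rule ccontr)
  assume no: "\<not> (\<exists>i\<ge>N. occ u w i)"
  define m where "m = length w"
  have m: "m \<ge> 1"
  proof (rule ccontr)
    assume "\<not> m \<ge> 1" then have "w = []" by (simp add: m_def Suc_le_eq)
    then have "occ u w N" by (simp add: occ_def)
    with no show False by blast
  qed
  define v where "v t = u (N + t)" for t
  define W where "W k = range (\<lambda>s. win v s k)" for k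
  have winv: "win v s k = win u (N + s) k" for s k by (simp add: win_def v_def add.assoc)
  have Wsub: "W k \<subseteq> {w \<in> lang u. length w = k}" for k
    unfolding W_def winv using win_in_lang by auto
  have finW: "finite (W k)" for k using finite_subset[OF Wsub sturmian_fin[OF st]] .
  have bl: "W k = butlast ` W (Suc k)" for k unfolding W_def by (rule bl_range)
  have mono: "card (W k) \<le> card (W (Suc k))" for k unfolding bl[of k] by (rule card_image_le[OF finW])
  have W0: "W 0 = {[]}" by (auto simp: W_def win_def)
  have "W m \<subseteq> {w \<in> lang u. length w = m} - {w}"
  proof -
    have "win v s m \<noteq> w" for s
    proof
      assume "win v s m = w"
      then have "occ u w (N + s)" by (simp add: occ_win winv m_def)
      with no show False by auto
    qed
    then show ?thesis using Wsub unfolding W_def by blast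
  qed
  then have "card (W m) \<le> card ({w \<in> lang u. length w = m} - {w})"
    by (rule card_mono[rotated]) (use sturmian_fin[OF st] in blast)
  also have "\<dots> = m" using sturmian_card[OF st m] w sturmian_fin[OF st] by (simp add: m_def)
  finally have cm: "card (W m) \<le> m" .
  have "\<exists>k<m. card (W (Suc k)) \<le> card (W k)"
  proof (rule ccontr)
    assume "\<not> ?thesis"
    then have lt: "k < m \<Longrightarrow> card (W k) < card (W (Suc k))" for k by auto
    have "k \<le> m \<Longrightarrow> card (W k) \<ge> k + 1" for k
    proof (induction k)
      case 0 then show ?case by (simp add: W0)
    next
      case (Suc k) then show ?case using lt[of k] by simp
    qed
    from this[of m] cm show False by simp
  qed
  then obtain k where k: "card (W (Suc k)) \<le> card (W k)" by blast
  have "\<exists>s s'. s < s' \<and> (\<forall>t. v (s + t) = v (s' + t))"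
    by (rule MH[of v k]) (use finW k in \<open>simp_all add: W_def\<close>)
  then obtain s s' where "s < s'" "\<forall>t. v (s + t) = v (s' + t)" by blast
  then have "\<forall>t. u (N + s + t) = u (N + s + (s' - s) + t)" by (simp add: v_def add.assoc)
  from not_evper[OF st _ this] \<open>s < s'\<close> show False by simp
qed



lemma lang_two_ext:
  assumes st: "sturmian u" and w: "w \<in> lang u"
  shows "\<exists>a c. a # w @ [c] \<in> lang u"
proof -
  obtain i where i: "i \<ge> 1" "occ u w i" using recurrent[OF st w, of 1] by blast
  have "occ u (u (i - 1) # w @ [u (i + length w)]) (i - 1)"
    unfolding occ_def
  proof (intro allI impI)
    fix j assume j: "j < length (u (i - 1) # w @ [u (i + length w)])"
    show "(u (i - 1) # w @ [u (i + length w)]) ! j = u (i - 1 + j)"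
    proof (cases j)
      case 0 then show ?thesis by simp
    next
      case (Suc j')
      then have "j' < length w \<or> j' = length w" using j by auto
      then show ?thesis
      proof
        assume "j' < length w" then show ?thesis using i Suc by (simp add: nth_append occ_def)
      next
        assume "j' = length w" then show ?thesis using i Suc by (simp add: nth_append)
      qed
    qed
  qed
  then show ?thesis using lang_occ by blast
qed

primrec Wk :: "(nat\<Rightarrow>nat) \<Rightarrow> nat list \<Rightarrow> nat \<Rightarrow> nat list" where
  "Wk u w 0 = w"
| "Wk u w (Suc k) = (SOME w'. \<exists>a c. w' = a # Wk u w k @ [c] \<and> w' \<in> lang u)"

declare Wk.simps(2)[simp del]

lemma Wk_props:
  assumes st: "sturmian u" and w: "w \<in> lang u"
  shows "Wk u w k \<in> lang u \<and> length (Wk u w k) = length w + 2 * k"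
proof (induction k)
  case 0 then show ?case using w by simp
next
  case (Suc k)
  then have "\<exists>w'. \<exists>a c. w' = a # Wk u w k @ [c] \<and> w' \<in> lang u"
    using lang_two_ext[OF st] by blast
  then have "\<exists>a c. Wk u w (Suc k) = a # Wk u w k @ [c] \<and> Wk u w (Suc k) \<in> lang u"
    unfolding Wk.simps by (rule someI_ex)
  then show ?case using Suc by auto
qed

lemma Wk_step:
  assumes st: "sturmian u" and w: "w \<in> lang u"
  shows "\<exists>a c. Wk u w (Suc k) = a # Wk u w k @ [c]"
proof -
  have "Wk u w k \<in> lang u" using Wk_props[OF st w] by blast
  then have "\<exists>w'. \<exists>a c. w' = a # Wk u w k @ [c] \<and> w' \<in> lang u"
    using lang_two_ext[OF st] by blast
  then have "\<exists>a c. Wk u w (Suc k) = a # Wk u w k @ [c] \<and> Wk u w (Suc k) \<in> lang u"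
    unfolding Wk.simps by (rule someI_ex)
  then show ?thesis by blast
qed

lemma Wk_cons:
  assumes st: "sturmian u" and w: "w \<in> lang u" and i: "i < length (Wk u w k)"
  shows "Wk u w (k + t) ! (i + t) = Wk u w k ! i"
proof (induction t)
  case 0 then show ?case by simp
next
  case (Suc t)
  obtain a c where e: "Wk u w (Suc (k + t)) = a # Wk u w (k + t) @ [c]" using Wk_step[OF st w] by blast
  have "i + t < length (Wk u w (k + t))" using i Wk_props[OF st w] by simp
  then show ?case using Suc by (simp add: e nth_append)
qed

definition bseq :: "(nat\<Rightarrow>nat) \<Rightarrow> nat list \<Rightarrow> int \<Rightarrow> nat" where
  "bseq u w j = Wk u w (nat \<bar>j\<bar> + 1) ! nat (j + int (nat \<bar>j\<bar> + 1))"

lemma bseq_eq: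
  assumes st: "sturmian u" and w: "w \<in> lang u"
    and k: "- int k \<le> j" "j < int (length w) + int k"
  shows "bseq u w j = Wk u w k ! nat (j + int k)"
proof -
  define k0 where "k0 = nat \<bar>j\<bar> + 1"
  have k0i: "int k0 = \<bar>j\<bar> + 1" by (simp add: k0_def)
  define K where "K = max k k0"
  have L: "length (Wk u w k') = length w + 2 * k'" for k' using Wk_props[OF st w] by blast
  have gen: "Wk u w K ! nat (j + int K) = Wk u w k' ! nat (j + int k')"
    if a: "k' \<le> K" and b: "0 \<le> j + int k'" and c: "j < int (length w) + int k'" for k'
  proof -
    have "int (nat (j + int k')) < int (length (Wk u w k'))" using b c L[of k'] by simp
    then have lt: "nat (j + int k') < length (Wk u w k')" by linarith
    have e1: "k' + (K - k') = K" using a by simp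
    have jk: "j + int K = (j + int k') + int (K - k')" using a by simp
    have "nat (j + int K) = nat ((j + int k') + int (K - k'))" by (simp only: jk)
    also have "\<dots> = nat (j + int k') + nat (int (K - k'))" by (rule nat_add_distrib[OF b]) simp
    also have "\<dots> = nat (j + int k') + (K - k')" by (simp only: nat_int)
    finally have e2: "nat (j + int k') + (K - k') = nat (j + int K)" by (rule sym)
    show ?thesis using Wk_cons[OF st w lt, of "K - k'"] unfolding e1 e2 .
  qed
  have 1: "Wk u w K ! nat (j + int K) = Wk u w k ! nat (j + int k)"
    by (rule gen) (use k in \<open>simp_all add: K_def\<close>)
  have ab: "0 \<le> j + \<bar>j\<bar>" "j \<le> \<bar>j\<bar>" by arith+
  have 2: "Wk u w K ! nat (j + int K) = Wk u w k0 ! nat (j + int k0)"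
  proof (rule gen)
    show "k0 \<le> K" by (simp add: K_def)
    show "0 \<le> j + int k0" unfolding k0i using ab by linarith
    show "j < int (length w) + int k0" unfolding k0i using ab by linarith
  qed
  have "bseq u w j = Wk u w k0 ! nat (j + int k0)" unfolding bseq_def k0_def by (rule refl)
  also have "\<dots> = Wk u w K ! nat (j + int K)" using 2 by (rule sym)
  also have "\<dots> = Wk u w k ! nat (j + int k)" using 1 .
  finally show ?thesis .
qed

lemma bseq_w:
  assumes st: "sturmian u" and w: "w \<in> lang u" and j: "j < length w"
  shows "bseq u w (int j) = w ! j"
  using bseq_eq[OF st w, of 0 "int j"] j by simp

lemma bseq_Xtilde:
  assumes st: "sturmian u" and w: "w \<in> lang u"
  shows "bseq u w \<in> Xtilde u"
  unfolding Xtilde_iff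
proof (intro allI)
  fix p :: int and K :: nat
  define k where "k = nat \<bar>p\<bar> + K + 1"
  obtain i0 where i0: "occ u (Wk u w k) i0" using Wk_props[OF st w] lang_occ by blast
  have L: "length (Wk u w k) = length w + 2 * k" using Wk_props[OF st w] by blast
  have "bseq u w (p + int j) = u (i0 + nat (p + int k) + j)" if j: "j < K" for j
  proof -
    have "bseq u w (p + int j) = Wk u w k ! nat (p + int j + int k)"
      by (rule bseq_eq[OF st w]) (use j in \<open>auto simp: k_def\<close>)
    also have "nat (p + int j + int k) = nat (p + int k) + j"
    proof -
      have b: "0 \<le> p + int k" by (simp add: k_def)
      have "nat (p + int j + int k) = nat ((p + int k) + int j)" by (simp only: ac_simps)
      also have "\<dots> = nat (p + int k) + nat (int j)" by (rule nat_add_distrib[OF b]) simp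
      finally show ?thesis by (simp only: nat_int)
    qed
    also have "Wk u w k ! (nat (p + int k) + j) = u (i0 + (nat (p + int k) + j))"
      using i0 L j unfolding occ_def by (auto simp: k_def)
    finally show ?thesis by (simp add: add.assoc)
  qed
  then show "\<exists>i. \<forall>j<K. bseq u w (p + int j) = u (i + j)" by (intro exI[of _ "i0 + nat (p + int k)"]) blast
qed



lemma occ_append: "occ u w i \<Longrightarrow> occ u v (i + length w) \<Longrightarrow> occ u (w @ v) i"
  unfolding occ_def
proof (intro allI impI)
  fix j assume a: "\<forall>j<length w. w ! j = u (i + j)" "\<forall>j<length v. v ! j = u (i + length w + j)"
    and j: "j < length (w @ v)"
  show "(w @ v) ! j = u (i + j)"
  proof (cases "j < length w")
    case True then show ?thesis using a by (simp add: nth_append)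
  next
    case False
    then have "j - length w < length v" using j by simp
    then have "v ! (j - length w) = u (i + length w + (j - length w))" using a by blast
    then show ?thesis using False by (simp add: nth_append)
  qed
qed

lemma occ_single: "occ u [c] i \<longleftrightarrow> u i = c"
  by (auto simp: occ_def)

lemma length_Lblock[simp]: "length (Lblock l n) = n" by (simp add: Lblock_def)

lemma Lblock_Suc: "Lblock l (Suc n) = Lblock l n @ [l (Suc n)]"
  by (simp add: Lblock_def)

lemma nth_Lblock: "j < n \<Longrightarrow> Lblock l n ! j = l (Suc j)"
  by (simp add: Lblock_def del: upt_Suc)

lemma deviation:
  assumes st: "sturmian u" and ls: "left_special_seq u l" and x: "x \<in> {0,1}"
  shows "\<exists>v. ((1 - x) # Lblock l n) @ v \<in> lang u \<and> (x # Lblock l n) @ v \<notin> lang u"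
proof (rule ccontr)
  assume "\<not> ?thesis"
  then have H: "\<And>v. ((1 - x) # Lblock l n) @ v \<in> lang u \<Longrightarrow> (x # Lblock l n) @ v \<in> lang u"
    by blast
  define w where "w = (1 - x) # Lblock l n"
  have wl: "w \<in> lang u" using ls x by (auto simp: w_def left_special_seq_def)
  obtain i where i: "occ u w i" using recurrent[OF st wl, of 0] by blast
  obtain j where j: "j \<ge> Suc i" "occ u w j" using recurrent[OF st wl, of "Suc i"] by blast
  have eq: "u (i + t) = u (j + t)" for t
  proof (induction t rule: less_induct)
    case (less t)
    show ?case
    proof (cases "t < length w")
      case True then show ?thesis using i j unfolding occ_def by metis
    next
      case False
      define v where "v = win u (i + length w) (t - length w)"
      have ov: "occ u v (i + length w)" by (simp add: occ_win v_def)
      have oi: "occ u (w @ v) i" by (rule occ_append[OF i ov])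
      have ov': "occ u v (j + length w)"
        unfolding occ_def
      proof (intro allI impI)
        fix s assume s: "s < length v"
        then have "s + length w < t" using False by (simp add: v_def)
        then have "u (i + (s + length w)) = u (j + (s + length w))" by (rule less.IH)
        then show "v ! s = u (j + length w + s)" using s by (simp add: v_def add_ac)
      qed
      have oj: "occ u (w @ v) j" by (rule occ_append[OF j(2) ov'])
      have lt: "length (w @ v) = t" using False by (simp add: v_def)
      have e1: "(w @ v) @ [u (i + t)] \<in> lang u"
        using occ_append[OF oi, of "[u (i + t)]"] lt lang_occ occ_single by metis
      have e2: "(w @ v) @ [u (j + t)] \<in> lang u"
        using occ_append[OF oj, of "[u (j + t)]"] lt lang_occ occ_single by metis
      show ?thesis
      proof (rule ccontr)
        assume ne: "u (i + t) \<noteq> u (j + t)"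
        have "u (i + t) \<in> {0,1}" "u (j + t) \<in> {0,1}" using sturmian_val[OF st] by auto
        then have both: "(w @ v) @ [0] \<in> lang u" "(w @ v) @ [1] \<in> lang u"
          using e1 e2 ne by auto
        have both': "((x # Lblock l n) @ v) @ [0] \<in> lang u" "((x # Lblock l n) @ v) @ [1] \<in> lang u"
          using H[of "v @ [0]"] H[of "v @ [1]"] both by (simp_all add: w_def)
        have "w @ v = (x # Lblock l n) @ v"
          by (rule rs_unique[OF st both both']) (simp add: w_def)
        then show False using x by (auto simp: w_def)
      qed
    qed
  qed
  have "\<forall>t. u (i + t) = u (i + (j - i) + t)" using eq j(1) by simp
  from not_evper[OF st _ this] j(1) show False by simp
qed



lemma sig_xL:
  assumes st: "sturmian u" and ls: "left_special_seq u l" and x: "x \<in> {0,1}" and n: "n \<ge> 1"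
  shows "significant u (x # Lblock l n)"
proof -
  define L where "L = Lblock l n"
  have inl: "x # L \<in> lang u" using ls x by (auto simp: L_def left_special_seq_def)
  have sub: "fol u (x # L) \<subseteq> fol u L"
  proof
    fix y assume "y \<in> fol u (x # L)"
    then obtain b where y: "y \<in> Xplus u" "b \<in> Xtilde u"
      "\<forall>j<Suc n. b (int j - int n) = (x # L) ! j" "\<forall>i. y i = b (int i)"
      by (auto simp: fol_def L_def)
    have "\<forall>j<n. b (int j - int (n - 1)) = L ! j"
    proof (intro allI impI)
      fix j assume "j < n"
      then have "b (int (Suc j) - int n) = (x # L) ! Suc j" using y(3) by blast
      moreover have e: "int j - int (n - 1) = int (Suc j) - int n" using n by simp
      ultimately show "b (int j - int (n - 1)) = L ! j" unfolding e by simp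
    qed
    then show "y \<in> fol u L" using y by (auto simp: fol_def L_def)
  qed
  obtain v where v: "((1 - x) # L) @ v \<in> lang u" "(x # L) @ v \<notin> lang u"
    using deviation[OF st ls x, of n] by (auto simp: L_def)
  define w where "w = ((1 - x) # L) @ v"
  define b0 where "b0 = bseq u w"
  have b0X: "b0 \<in> Xtilde u" unfolding b0_def by (rule bseq_Xtilde[OF st v(1)[folded w_def]])
  have b0w: "j < length w \<Longrightarrow> b0 (int j) = w ! j" for j
    unfolding b0_def by (rule bseq_w[OF st v(1)[folded w_def]])
  define c where "c = (\<lambda>j. b0 (j + int n))"
  have cX: "c \<in> Xtilde u" unfolding c_def by (rule Xtilde_shift[OF b0X])
  define z where "z = (\<lambda>i::nat. c (int i))"
  have zX: "z \<in> Xplus u"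
  proof -
    have "(\<lambda>i. c (0 + int i)) \<in> Xplus u" using cX unfolding Xtilde_def by blast
    then show ?thesis by (simp add: z_def)
  qed
  have lenw: "length w = Suc n + length v" by (simp add: w_def L_def)
  have zin: "z \<in> fol u L"
  proof -
    have "\<forall>j<n. c (int j - int (n - 1)) = L ! j"
    proof (intro allI impI)
      fix j assume j: "j < n"
      have "int j - int (n - 1) + int n = int (Suc j)" using n by simp
      then have "c (int j - int (n - 1)) = b0 (int (Suc j))" unfolding c_def by (simp only:)
      also have "\<dots> = w ! Suc j" using j lenw by (intro b0w) simp
      also have "\<dots> = L ! j" using j by (simp add: w_def nth_append L_def)
      finally show "c (int j - int (n - 1)) = L ! j" .
    qed
    then show ?thesis using zX cX by (auto simp: fol_def L_def z_def)
  qed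
  have zout: "z \<notin> fol u (x # L)"
  proof
    assume "z \<in> fol u (x # L)"
    then obtain d where d: "d \<in> Xtilde u"
      "\<forall>j<Suc n. d (int j - int n) = (x # L) ! j" "\<forall>i. z i = d (int i)"
      by (auto simp: fol_def L_def)
    obtain i where i: "\<forall>j<Suc n + length v. d (- int n + int j) = u (i + j)"
      using d(1) unfolding Xtilde_iff by blast
    have "occ u ((x # L) @ v) i"
      unfolding occ_def
    proof (intro allI impI)
      fix j assume j: "j < length ((x # L) @ v)"
      then have j': "j < Suc n + length v" by (simp add: L_def)
      show "((x # L) @ v) ! j = u (i + j)"
      proof (cases "j < Suc n")
        case True
        then have "((x # L) @ v) ! j = (x # L) ! j" by (subst nth_append) (simp add: L_def)
        also have "\<dots> = d (int j - int n)" using d(2) True by simp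
        also have "\<dots> = u (i + j)" using i j' by (simp add: algebra_simps)
        finally show ?thesis .
      next
        case False
        define t where "t = j - Suc n"
        have jt: "j = Suc n + t" using False by (simp add: t_def)
        have tv: "t < length v" using j' jt by simp
        have "((x # L) @ v) ! j = v ! t" using jt by (simp add: nth_append L_def)
        also have "\<dots> = w ! (Suc n + t)" by (simp add: w_def nth_append L_def)
        also have "\<dots> = b0 (int (Suc n + t))" using tv lenw by (intro b0w[symmetric]) simp
        also have "\<dots> = c (int (Suc t))" by (simp add: c_def algebra_simps)
        also have "\<dots> = z (Suc t)" by (simp add: z_def)
        also have "\<dots> = d (int (Suc t))" using d(3) by simp
        also have "int (Suc t) = - int n + int j" using jt by simp
        also have "d (- int n + int j) = u (i + j)" using i j' by simp
        finally show ?thesis .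
      qed
    qed
    then have "(x # L) @ v \<in> lang u" using lang_occ by blast
    with v(2) show False by blast
  qed
  have "fol u (x # L) \<subset> fol u L" using sub zin zout by blast
  then show ?thesis using inl n by (simp add: significant_def L_def)
qed

theorem lemma4p9:
  fixes u l :: "nat \<Rightarrow> nat" and n x :: nat
  assumes "sturmian u"
    and "left_special_seq u l"
    and "n > 1"
    and "x \<in> {0, 1}"
    and "significant u (x # Lblock l (n - 1))"
  shows "HB_arrow u (x # Lblock l (n - 1)) (x # Lblock l n)"
proof -
  have nn: "n = Suc (n - 1)" using assms(3) by simp
  have eq: "(x # Lblock l (n - 1)) @ [l n] = x # Lblock l n"
    using Lblock_Suc[of l "n - 1"] nn by simp
  have sg: "significant u (x # Lblock l n)"
    by (rule sig_xL[OF assms(1,2,4)]) (use assms(3) in simp)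
  have inl: "x # Lblock l n \<in> lang u"
    using assms(2,4) by (auto simp: left_special_seq_def)
  have "sig u (x # Lblock l n) = x # Lblock l n"
    unfolding sig_def
  proof (rule the_equality)
    show "suffix (x # Lblock l n) (x # Lblock l n) \<and> significant u (x # Lblock l n) \<and>
      (\<forall>s'. suffix s' (x # Lblock l n) \<and> significant u s' \<longrightarrow> length s' \<le> length (x # Lblock l n))"
      using sg by (auto dest: suffix_length_le)
  next
    fix s assume "suffix s (x # Lblock l n) \<and> significant u s \<and>
      (\<forall>s'. suffix s' (x # Lblock l n) \<and> significant u s' \<longrightarrow> length s' \<le> length s)"
    then have "suffix s (x # Lblock l n)" "length (x # Lblock l n) \<le> length s" using sg by auto
    then show "s = x # Lblock l n"
    proof -
      obtain zs where zs: "x # Lblock l n = zs @ s" using \<open>suffix s (x # Lblock l n)\<close> by (auto simp: suffix_def)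
      have "length zs = 0" using \<open>length (x # Lblock l n) \<le> length s\<close> zs
        by (metis add_le_same_cancel2 le_zero_eq length_append)
      then show ?thesis using zs by simp
    qed
  qed
  then show ?thesis unfolding HB_arrow_def using assms(5) sg inl eq by metis
qed

end
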